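(* Let $0<p<\tfrac12$ and let $Q=(q_{j,k})_{j,k\geq 0}$ be the generator on $\mathbb N_0$ given by $q_{j,j+1}=jp$, $q_{j,k}=\binom{j}{k}p^k(1-p)^{j-k}$ for $0\leq k\leq j-1$, $q_{j,j}=-(jp+1-p^j)$, and $q_{j,k}=0$ otherwise. Then $x_k=k$ ($k\geq1$) is a $(1-2p)$-invariant vector for $Q$, i.e. a positive vector $x=(x_k)_{k\geq1}$ with $\sum_{k\geq 1}q_{j,k}x_k=-(1-2p)x_j$ for all $j\geq1$, and any $(1-2p)$-invariant vector for $Q$ is a positive multiple of this one.
   Context: A $\lambda$-invariant vector for $Q$ is a positive right eigenvector of $Q$ restricted to $\mathbb N=\{1,2,\dots\}$ with eigenvalue $-\lambda$. *)

theory Defs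
  imports "HOL-Analysis.Analysis"
begin

definition Qgen :: "real \<Rightarrow> nat \<Rightarrow> nat \<Rightarrow> real" where
  "Qgen p j k =
     (if k = j + 1 then real j * p
      else if k < j then real (j choose k) * p ^ k * (1 - p) ^ (j - k)
      else if k = j then - (real j * p + 1 - p ^ j)
      else 0)"

definition lambda_invariant :: "(nat \<Rightarrow> nat \<Rightarrow> real) \<Rightarrow> real \<Rightarrow> (nat \<Rightarrow> real) \<Rightarrow> bool" where
  "lambda_invariant Q lam x \<longleftrightarrow>
     (\<forall>k\<ge>1. x k > 0) \<and>
     (\<forall>j\<ge>1. ((\<lambda>k. Q j k * x k) has_sum (- lam * x j)) {1..})"

end

theory Submission
  imports Defs
begin

lemma row_hs:
  assumes "j \<ge> 1"
  shows "((\<lambda>k. Qgen p j k * x k) has_sum s) {1..} \<longleftrightarrow> s = (\<Sum>k\<in>{1..Suc j}. Qgen p j k * x k)"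
proof -
  have "((\<lambda>k. Qgen p j k * x k) has_sum s) {1..} \<longleftrightarrow> ((\<lambda>k. Qgen p j k * x k) has_sum s) {1..Suc j}"
    by (intro has_sum_cong_neutral) (auto simp: Qgen_def)
  also have "\<dots> \<longleftrightarrow> s = (\<Sum>k\<in>{1..Suc j}. Qgen p j k * x k)"
    by (intro has_sum_finite_iff) auto
  finally show ?thesis .
qed

lemma sum_split:
  assumes "j \<ge> 1"
  shows "(\<Sum>k\<in>{1..Suc j}. f k) = (\<Sum>k\<in>{1..<j}. f k) + f j + f (Suc j)"
proof -
  have "{1..Suc j} = insert (Suc j) (insert j {1..<j})" using assms by auto
  thus ?thesis by (simp add: algebra_simps)
qed

lemma binom_mean:
  fixes p :: real
  shows "(\<Sum>k\<le>j. real (j choose k) * p ^ k * (1 - p) ^ (j - k) * real k) = real j * p"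
proof (cases j)
  case 0 then show ?thesis by simp
next
  case (Suc n)
  have "(\<Sum>k\<le>Suc n. real (Suc n choose k) * p ^ k * (1 - p) ^ (Suc n - k) * real k)
      = (\<Sum>k\<le>n. real (Suc n choose Suc k) * p ^ Suc k * (1 - p) ^ (Suc n - Suc k) * real (Suc k))"
    by (subst sum.atMost_Suc_shift) simp
  also have "\<dots> = (\<Sum>k\<le>n. real (Suc n) * p * (real (n choose k) * p ^ k * (1 - p) ^ (n - k)))"
  proof (rule sum.cong)
    fix k assume "k \<in> {..n}"
    have e: "real (Suc n choose Suc k) * real (Suc k) = real (Suc n) * real (n choose k)"
      using Suc_times_binomial_eq[of n k] by (metis of_nat_mult)
    show "real (Suc n choose Suc k) * p ^ Suc k * (1 - p) ^ (Suc n - Suc k) * real (Suc k)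
        = real (Suc n) * p * (real (n choose k) * p ^ k * (1 - p) ^ (n - k))"
    proof -
      have "real (Suc n choose Suc k) * p ^ Suc k * (1 - p) ^ (Suc n - Suc k) * real (Suc k)
          = (real (Suc n choose Suc k) * real (Suc k)) * (p * (p ^ k * (1 - p) ^ (n - k)))"
        by (simp only: power_Suc diff_Suc_Suc mult_ac)
      also have "\<dots> = (real (Suc n) * real (n choose k)) * (p * (p ^ k * (1 - p) ^ (n - k)))"
        by (simp only: e)
      also have "\<dots> = real (Suc n) * p * (real (n choose k) * p ^ k * (1 - p) ^ (n - k))"
        by (simp only: mult_ac)
      finally show ?thesis .
    qed
  qed simp
  also have "\<dots> = real (Suc n) * p * (\<Sum>k\<le>n. real (n choose k) * p ^ k * (1 - p) ^ (n - k))"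
    by (simp only: sum_distrib_left)
  also have "(\<Sum>k\<le>n. real (n choose k) * p ^ k * (1 - p) ^ (n - k)) = (p + (1 - p)) ^ n"
    by (simp only: binomial_ring mult_ac)
  finally show ?thesis using Suc by simp
qed

lemma binom_part:
  fixes p :: real
  assumes "j \<ge> 1"
  shows "(\<Sum>k\<in>{1..<j}. real (j choose k) * p ^ k * (1 - p) ^ (j - k) * real k) = real j * p - real j * p ^ j"
proof -
  have "{..j} = insert 0 (insert j {1..<j})" using assms by auto
  hence "(\<Sum>k\<le>j. real (j choose k) * p ^ k * (1 - p) ^ (j - k) * real k)
     = (\<Sum>k\<in>{1..<j}. real (j choose k) * p ^ k * (1 - p) ^ (j - k) * real k) + real j * p ^ j"
    using assms by simp
  thus ?thesis using binom_mean[of j p] by simp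
qed

lemma eig:
  fixes p :: real
  assumes "j \<ge> 1"
  shows "(\<Sum>k\<in>{1..Suc j}. Qgen p j k * real k) = - (1 - 2*p) * real j"
proof -
  have "(\<Sum>k\<in>{1..<j}. Qgen p j k * real k) = (\<Sum>k\<in>{1..<j}. real (j choose k) * p ^ k * (1 - p) ^ (j - k) * real k)"
    by (intro sum.cong) (auto simp: Qgen_def)
  also have "\<dots> = real j * p - real j * p ^ j" using binom_part assms by blast
  finally have a: "(\<Sum>k\<in>{1..<j}. Qgen p j k * real k) = real j * p - real j * p ^ j" .
  show ?thesis
    unfolding sum_split[OF assms] a by (simp add: Qgen_def algebra_simps)
qed

theorem lemma3:
  fixes p :: real
  assumes "0 < p" and "p < 1/2"
  shows "lambda_invariant (Qgen p) (1 - 2*p) (\<lambda>k. real k) \<and>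
         (\<forall>x. lambda_invariant (Qgen p) (1 - 2*p) x \<longrightarrow>
              (\<exists>c>0. \<forall>k\<ge>1. x k = c * real k))"
proof (intro conjI allI impI)
  show "lambda_invariant (Qgen p) (1 - 2*p) (\<lambda>k. real k)"
    unfolding lambda_invariant_def
  proof (intro conjI allI impI)
    fix j :: nat assume j: "j \<ge> 1"
    show "((\<lambda>k. Qgen p j k * real k) has_sum (- (1 - 2*p) * real j)) {1..}"
      using row_hs[OF j, of p "\<lambda>k. real k"] eig[OF j, of p] by simp
  qed simp
next
  fix x assume inv: "lambda_invariant (Qgen p) (1 - 2*p) x"
  have pos: "\<And>k. k \<ge> 1 \<Longrightarrow> x k > 0" using inv unfolding lambda_invariant_def by auto
  have eqx: "\<And>j. j \<ge> 1 \<Longrightarrow> (\<Sum>k\<in>{1..Suc j}. Qgen p j k * x k) = - (1 - 2*p) * x j"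
  proof -
    fix j :: nat assume j: "j \<ge> 1"
    have "((\<lambda>k. Qgen p j k * x k) has_sum (- (1 - 2*p) * x j)) {1..}"
      using inv j unfolding lambda_invariant_def by blast
    thus "(\<Sum>k\<in>{1..Suc j}. Qgen p j k * x k) = - (1 - 2*p) * x j"
      using row_hs[OF j] by simp
  qed
  define y where "y k = x k - x 1 * real k" for k
  have eqy: "(\<Sum>k\<in>{1..Suc j}. Qgen p j k * y k) = - (1 - 2*p) * y j" if "j \<ge> 1" for j
  proof -
    have "(\<Sum>k\<in>{1..Suc j}. Qgen p j k * y k) = (\<Sum>k\<in>{1..Suc j}. Qgen p j k * x k) - x 1 * (\<Sum>k\<in>{1..Suc j}. Qgen p j k * real k)"
      by (simp add: y_def algebra_simps sum_subtractf sum_distrib_left)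
    also have "\<dots> = - (1 - 2*p) * y j" unfolding eqx[OF that] eig[OF that, of p] y_def by (simp add: algebra_simps)
    finally show ?thesis .
  qed
  have "\<forall>k. k \<ge> 1 \<longrightarrow> k \<le> n \<longrightarrow> y k = 0" for n
  proof (induction n)
    case 0 then show ?case by simp
  next
    case (Suc n)
    show ?case
    proof (intro allI impI)
      fix k assume k: "1 \<le> k" "k \<le> Suc n"
      show "y k = 0"
      proof (cases "k \<le> n")
        case True then show ?thesis using Suc k by auto
      next
        case False
        hence kk: "k = Suc n" using k by simp
        show ?thesis
        proof (cases "n = 0")
          case True then show ?thesis using kk by (simp add: y_def)
        next
          case False
          hence n1: "n \<ge> 1" by simp
          have z: "\<And>i. i \<ge> 1 \<Longrightarrow> i \<le> n \<Longrightarrow> y i = 0" using Suc by auto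
          have "(\<Sum>i\<in>{1..<n}. Qgen p n i * y i) = 0" using z by (intro sum.neutral) auto
          hence "Qgen p n (Suc n) * y (Suc n) = 0"
            using eqy[OF n1] z[OF n1 order.refl] unfolding sum_split[OF n1] by simp
          moreover have "Qgen p n (Suc n) \<noteq> 0" using n1 assms by (simp add: Qgen_def)
          ultimately show ?thesis using kk by simp
        qed
      qed
    qed
  qed
  hence yz: "\<And>k. k \<ge> 1 \<Longrightarrow> y k = 0" by blast
  have "\<And>k. k \<ge> 1 \<Longrightarrow> x k = x 1 * real k"
  proof -
    fix k :: nat assume "k \<ge> 1"
    from yz[OF this] show "x k = x 1 * real k" unfolding y_def by simp
  qed
  moreover have "x 1 > 0" using pos by simp
  ultimately show "\<exists>c>0. \<forall>k\<ge>1. x k = c * real k" by blast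
qed

end
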